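(* Let $A\in\{0,1\}^{N\times n}$ and suppose there exists a margin-$m$, relative-bias-$\tau$ embedding of $A$ in dimension $d$. Then there exists a margin-$\frac{m}{1+|\tau|}$, relative-bias-$0$ embedding of $A$ in dimension $d+1$, and $\frac{m}{1+|\tau|}\ge\frac m2$.
   Context: For $A\in\{0,1\}^{N\times n}$, $m\ge 0$ and $\tau\in\mathbb{R}$, unit vectors $U_1,\dots,U_N,V_1,\dots,V_n\in\mathbb{R}^d$ form a margin-$m$, relative-bias-$\tau$ embedding of $A$ in dimension $d$ if $\langle U_j,V_i\rangle\ge\tau+m$ whenever $A_{ji}=1$ and $\langle U_j,V_i\rangle\le\tau-m$ whenever $A_{ji}=0$. *)

theory Defs
  imports Complex_Main
begin

text \<open>Vectors of R^d are represented as functions nat => real vanishing outside {..<d}.\<close>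

definition dinner :: "nat \<Rightarrow> (nat \<Rightarrow> real) \<Rightarrow> (nat \<Rightarrow> real) \<Rightarrow> real" where
  "dinner d x y = (\<Sum>k<d. x k * y k)"

definition unit_vec :: "nat \<Rightarrow> (nat \<Rightarrow> real) \<Rightarrow> bool" where
  "unit_vec d x \<longleftrightarrow> (\<forall>k\<ge>d. x k = 0) \<and> dinner d x x = 1"

definition binary_matrix :: "nat \<Rightarrow> nat \<Rightarrow> (nat \<Rightarrow> nat \<Rightarrow> nat) \<Rightarrow> bool" where
  "binary_matrix N n A \<longleftrightarrow> (\<forall>j<N. \<forall>i<n. A j i \<in> {0, 1})"

definition is_embedding ::
  "nat \<Rightarrow> nat \<Rightarrow> (nat \<Rightarrow> nat \<Rightarrow> nat) \<Rightarrow> real \<Rightarrow> real \<Rightarrow> nat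
    \<Rightarrow> (nat \<Rightarrow> nat \<Rightarrow> real) \<Rightarrow> (nat \<Rightarrow> nat \<Rightarrow> real) \<Rightarrow> bool" where
  "is_embedding N n A m \<tau> d U V \<longleftrightarrow>
     (\<forall>j<N. unit_vec d (U j)) \<and> (\<forall>i<n. unit_vec d (V i)) \<and>
     (\<forall>j<N. \<forall>i<n. (A j i = 1 \<longrightarrow> dinner d (U j) (V i) \<ge> \<tau> + m) \<and>
                    (A j i = 0 \<longrightarrow> dinner d (U j) (V i) \<le> \<tau> - m))"

end

theory Submission
  imports Defs
begin

definition ext_vec :: "nat \<Rightarrow> (nat \<Rightarrow> real) \<Rightarrow> real \<Rightarrow> real \<Rightarrow> nat \<Rightarrow> real" where
  "ext_vec d x a b = (\<lambda>k. if k < d then x k * a else if k = d then b else 0)"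

lemma dinner_ext:
  "dinner (Suc d) (ext_vec d x a b) (ext_vec d y c e) = a * c * dinner d x y + b * e"
proof -
  have "dinner (Suc d) (ext_vec d x a b) (ext_vec d y c e)
      = (\<Sum>k<d. ext_vec d x a b k * ext_vec d y c e k) + b * e"
    by (simp add: dinner_def ext_vec_def)
  also have "(\<Sum>k<d. ext_vec d x a b k * ext_vec d y c e k) = (\<Sum>k<d. a * c * (x k * y k))"
    by (rule sum.cong) (auto simp: ext_vec_def)
  also have "\<dots> = a * c * dinner d x y" by (simp add: dinner_def sum_distrib_left)
  finally show ?thesis .
qed

lemma unit_ext:
  assumes "unit_vec d x" "a * a + b * b = 1"
  shows "unit_vec (Suc d) (ext_vec d x a b)"
  using assms dinner_ext[of d x a b x a b] unfolding unit_vec_def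
  by (auto simp: ext_vec_def)

theorem propositionA1:
  fixes N n d :: nat and A :: "nat \<Rightarrow> nat \<Rightarrow> nat" and m \<tau> :: real
    and U V :: "nat \<Rightarrow> nat \<Rightarrow> real"
  assumes "binary_matrix N n A"
    and "m \<ge> 0"
    and "is_embedding N n A m \<tau> d U V"
  shows "(\<exists>U' V'. is_embedding N n A (m / (1 + \<bar>\<tau>\<bar>)) 0 (d + 1) U' V')
         \<and> (\<bar>\<tau>\<bar> \<le> 1 \<longrightarrow> m / (1 + \<bar>\<tau>\<bar>) \<ge> m / 2)"
proof
  define s where "s = sqrt (1 + \<bar>\<tau>\<bar>)"
  define t where "t = sqrt \<bar>\<tau>\<bar>"
  have s2: "s * s = 1 + \<bar>\<tau>\<bar>" unfolding s_def by simp
  have t2: "t * t = \<bar>\<tau>\<bar>" unfolding t_def by simp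
  have spos: "s > 0" unfolding s_def by (smt (verit) real_sqrt_gt_zero)
  have n1: "(1/s) * (1/s) + (t/s) * (t/s) = 1"
    using s2 t2 spos by (simp add: field_simps)
  have n2: "(1/s) * (1/s) + (- sgn \<tau> * t/s) * (- sgn \<tau> * t/s) = 1"
    using s2 t2 spos by (cases "\<tau> = 0") (auto simp: field_simps sgn_if)
  define U' where "U' j = ext_vec d (U j) (1/s) (t/s)" for j
  define V' where "V' i = ext_vec d (V i) (1/s) (- sgn \<tau> * t/s)" for i
  have key: "dinner (d+1) (U' j) (V' i) = (dinner d (U j) (V i) - \<tau>) / (1 + \<bar>\<tau>\<bar>)" for i j
  proof -
    have "dinner (d+1) (U' j) (V' i) = (1/s)*(1/s) * dinner d (U j) (V i) + (t/s) * (- sgn \<tau> * t/s)"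
      unfolding U'_def V'_def by (simp add: dinner_ext)
    also have "\<dots> = (dinner d (U j) (V i) - sgn \<tau> * (t*t)) / (s*s)"
      using spos by (simp add: field_simps)
    also have "sgn \<tau> * (t*t) = \<tau>" using t2 by (simp add: sgn_mult_abs)
    finally show ?thesis using s2 by simp
  qed
  have p: "1 + \<bar>\<tau>\<bar> > 0" by simp
  show "\<exists>U' V'. is_embedding N n A (m / (1 + \<bar>\<tau>\<bar>)) 0 (d + 1) U' V'"
  proof (intro exI)
    show "is_embedding N n A (m / (1 + \<bar>\<tau>\<bar>)) 0 (d + 1) U' V'"
      using assms(3) unfolding is_embedding_def
      apply (simp only: key)
      using unit_ext[OF _ n1] unit_ext[OF _ n2] p
      apply (auto simp: U'_def V'_def)
      apply (metis divide_right_mono diff_ge_0_iff_ge add.commute le_diff_eq less_imp_le)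
      by (smt (verit, del_insts) divide_right_mono minus_divide_left)
  qed
  show "\<bar>\<tau>\<bar> \<le> 1 \<longrightarrow> m / (1 + \<bar>\<tau>\<bar>) \<ge> m / 2"
  proof
    assume "\<bar>\<tau>\<bar> \<le> 1"
    then have "1 + \<bar>\<tau>\<bar> \<le> 2" by simp
    then show "m / (1 + \<bar>\<tau>\<bar>) \<ge> m / 2"
      using assms(2) p by (intro divide_left_mono) auto
  qed
qed

end
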